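(* Let $m\geq 0$ and $k\geq 1$ be integers. If $\lambda$ is a partition with exactly $m$ $k$-hooks (i.e. $\alpha_k(\lambda)=m$), then \[ |\lambda|\geq t(m,k)= m\left(\left\lfloor \frac{m}{k}\right\rfloor +1\right)k-\binom{\lfloor m/k\rfloor +1}{2}k^2. \]
   Context: For a partition $\lambda=(\lambda_1\geq\cdots\geq\lambda_r>0)$, $|\lambda|=\sum_i\lambda_i$ is its weight. For a cell $u$ of the Young diagram of $\lambda$, the hook length of $u$ is the number of cells $v$ of the diagram with $v=u$, or $v$ below $u$ in the same column, or $v$ to the right of $u$ in the same row. $\alpha_k(\lambda)$ is the number of cells of the Young diagram of $\lambda$ with hook length exactly $k$ (the number of $k$-hooks). The number $t(m,k)$ is the weight of the partition with $m$ parts, writing $m=lk+r$ with $0\le r\le k-1$, consisting of $r$ parts equal to $(l+1)k$ followed by $k$ parts equal to $jk$ for each $j=l,l-1,\dots,1$. *)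

theory Defs
  imports Main
begin

definition is_partition :: "nat list \<Rightarrow> bool" where
  "is_partition la \<longleftrightarrow> sorted_wrt (\<ge>) la \<and> (\<forall>x\<in>set la. 0 < x)"

definition weight :: "nat list \<Rightarrow> nat" where
  "weight la = sum_list la"

definition cells :: "nat list \<Rightarrow> (nat \<times> nat) set" where
  "cells la = {(i, j). i < length la \<and> j < la ! i}"

definition hook_length :: "nat list \<Rightarrow> nat \<times> nat \<Rightarrow> nat" where
  "hook_length la u = card {v \<in> cells la.
      v = u \<or> (fst v = fst u \<and> snd v > snd u) \<or> (snd v = snd u \<and> fst v > fst u)}"

definition num_hooks :: "nat \<Rightarrow> nat list \<Rightarrow> nat" where
  "num_hooks k la = card {u \<in> cells la. hook_length la u = k}"

text \<open>The extremal partition: with m = l*k + r, 0 \<le> r < k, it consists of r parts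
  (l+1)*k followed by k parts j*k for each j = l, l-1, ..., 1.\<close>
definition t_partition :: "nat \<Rightarrow> nat \<Rightarrow> nat list" where
  "t_partition m k = (let l = m div k; r = m mod k in
     replicate r ((l + 1) * k) @ concat (map (\<lambda>j. replicate k (j * k)) (rev [1..<l+1])))"

definition t :: "nat \<Rightarrow> nat \<Rightarrow> nat" where
  "t m k = weight (t_partition m k)"

end

theory Submission imports Defs begin

lemma two_choose2: "2 * (n choose 2) = n * (n - 1)"
proof (induction n)
  case (Suc n)
  then show ?case by (cases n) (auto simp: numeral_2_eq_2)
qed simp

definition desc :: "nat \<Rightarrow> nat set \<Rightarrow> nat set" where
  "desc k S = {x\<in>S. k \<le> x \<and> x - k \<notin> S}"

lemma k1_aux:
  "finite S \<Longrightarrow> card S = n \<Longrightarrow> (card S choose 2) + (card (desc 1 S) + 1 choose 2) \<le> \<Sum>S"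
proof (induction n arbitrary: S)
  case 0
  then have e: "S = {}" by auto
  have "desc 1 S = {}" unfolding desc_def e by blast
  then show ?case using e by simp
next
  case (Suc n)
  have ne: "S \<noteq> {}" using Suc.prems by auto
  define M where "M = Max S"
  have MS: "M \<in> S" using Suc.prems ne by (simp add: M_def)
  have le: "\<And>x. x \<in> S \<Longrightarrow> x \<le> M" using Suc.prems by (simp add: M_def)
  define S' where "S' = S - {M}"
  have fS': "finite S'" using Suc.prems by (simp add: S'_def)
  have cS': "card S' = n" using Suc.prems MS by (simp add: S'_def)
  have IH: "(card S' choose 2) + (card (desc 1 S') + 1 choose 2) \<le> \<Sum>S'"
    using Suc.IH fS' cS' by blast
  have sumS: "\<Sum>S = \<Sum>S' + M"
    using Suc.prems MS by (simp add: S'_def sum.remove)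
  have sub: "desc 1 S \<subseteq> insert M (desc 1 S')"
    by (auto simp: desc_def S'_def)
  have fd: "finite (desc 1 S')" using fS' by (simp add: desc_def)
  have e1: "card (desc 1 S) \<le> card (desc 1 S') + 1"
    using card_mono[OF finite_insert[THEN iffD2, OF fd] sub] card_insert_if[OF fd, of M]
    by (auto split: if_splits)
  have e2: "card (desc 1 S) + Suc n \<le> M + 1"
  proof -
    have "(\<lambda>x. x - 1) ` desc 1 S \<subseteq> {..M} - S"
      using le by (auto simp: desc_def) (meson diff_le_self le le_trans)
    moreover have "inj_on (\<lambda>x. x - 1) (desc 1 S)" by (auto simp: desc_def inj_on_def)
    ultimately have "card (desc 1 S) \<le> card ({..M} - S)"
      by (metis card_inj_on_le finite_Diff finite_atMost)
    moreover have "card ({..M} - S) = M + 1 - Suc n"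
      using Suc.prems le by (subst card_Diff_subset) auto
    moreover have "card S \<le> card {..M}" using le by (intro card_mono) auto
    ultimately show ?thesis using Suc.prems by simp
  qed
  have c1: "2 * (card (desc 1 S) + 1 choose 2) \<le> 2 * (card (desc 1 S') + 1 choose 2) + 2 * card (desc 1 S)"
  proof (cases "card (desc 1 S) \<le> card (desc 1 S')")
    case True
    then have "(card (desc 1 S) + 1) * card (desc 1 S) \<le> (card (desc 1 S') + 1) * card (desc 1 S')"
      by (intro mult_mono) auto
    then show ?thesis unfolding two_choose2 by simp
  next
    case False
    then have "card (desc 1 S) = card (desc 1 S') + 1" using e1 by simp
    then show ?thesis unfolding two_choose2 by (simp add: algebra_simps)
  qed
  have c2: "2 * (Suc n choose 2) = 2 * (n choose 2) + 2 * n" unfolding two_choose2 by (cases n) auto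
  have c3: "card S choose 2 = Suc n choose 2" using Suc.prems by simp
  show ?case using IH c1 c2 c3 e2 sumS cS' by simp
qed

lemma k1: "finite S \<Longrightarrow> (card S choose 2) + (card (desc 1 S) + 1 choose 2) \<le> \<Sum>S"
  using k1_aux by blast

lemma sum_ge: "finite S \<Longrightarrow> (card S choose 2) \<le> \<Sum>S"
  using k1 by fastforce

lemma sum_lessThan_choose: "(\<Sum>q<n. q) = n choose 2"
proof (induction n)
  case (Suc n)
  have "Suc n choose 2 = n + (n choose 2)"
    using binomial_Suc_Suc[of n 1] by (simp add: numeral_2_eq_2)
  then show ?case using Suc by simp
qed simp

lemma convex_choose: "int (l + 1) * int e - int (l + 1 choose 2) \<le> int (e + 1 choose 2)"
proof -
  have a: "2 * int (e + 1 choose 2) = int (e + 1) * int e"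
    using two_choose2[of "e+1"] by (metis diff_add_inverse2 of_nat_mult of_nat_numeral)
  have b: "2 * int (l + 1 choose 2) = int (l + 1) * int l"
    using two_choose2[of "l+1"] by (metis diff_add_inverse2 of_nat_mult of_nat_numeral)
  have c: "0 \<le> (int e - int l) * (int e - int l - 1)"
  proof (cases "int e - int l \<le> 0")
    case True then show ?thesis by (intro mult_nonpos_nonpos) auto
  next
    case False then show ?thesis by (intro mult_nonneg_nonneg) auto
  qed
  have "2 * (int (l + 1) * int e - int (l + 1 choose 2)) \<le> 2 * int (e + 1 choose 2)"
    using a b c by (simp add: algebra_simps)
  then show ?thesis by simp
qed

lemma divmod_k: "(\<rho>::nat) < k \<Longrightarrow> (\<rho> + q * k) div k = q \<and> (\<rho> + q * k) mod k = \<rho>"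
  by auto

lemma abacus:
  assumes k: "k \<ge> 1" and fin: "finite B"
  shows "int k * (int (l + 1) * int (card (desc k B)) - int k * int (l + 1 choose 2))
         \<le> int (\<Sum>B) - int (card B choose 2)"
proof -
  define R where "R = (\<lambda>\<rho>. {q. \<rho> + q * k \<in> B})"
  define g where "g = (\<lambda>(\<rho>::nat, q::nat). \<rho> + q * k)"
  have finR: "finite (R \<rho>)" for \<rho>
  proof (rule finite_subset)
    show "R \<rho> \<subseteq> {..Max B}"
    proof
      fix q assume "q \<in> R \<rho>"
      then have "\<rho> + q * k \<in> B" by (simp add: R_def)
      then have "\<rho> + q * k \<le> Max B" using fin by simp
      moreover have "q \<le> q * k" using k by simp
      ultimately have "q \<le> Max B" by linarith
      then show "q \<in> {..Max B}" by simp
    qed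
  qed simp
  have inj: "inj_on g (Sigma {..<k} A)" for A
  proof (rule inj_onI)
    fix x y assume "x \<in> Sigma {..<k} A" "y \<in> Sigma {..<k} A" "g x = g y"
    then obtain a b c d where xy: "x = (a, b)" "y = (c, d)" and ac: "a < k" "c < k"
      and eq: "a + b * k = c + d * k" by (auto simp: g_def)
    have "b = d" using divmod_k[OF ac(1), of b] divmod_k[OF ac(2), of d] eq by metis
    moreover have "a = c" using divmod_k[OF ac(1), of b] divmod_k[OF ac(2), of d] eq by metis
    ultimately show "x = y" using xy by simp
  qed
  have Beq: "B = g ` Sigma {..<k} R"
  proof
    show "B \<subseteq> g ` Sigma {..<k} R"
    proof
      fix x assume x: "x \<in> B"
      have "x = g (x mod k, x div k)" by (simp add: g_def)
      moreover have "(x mod k, x div k) \<in> Sigma {..<k} R"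
        using x k by (simp add: R_def)
      ultimately show "x \<in> g ` Sigma {..<k} R" by blast
    qed
  qed (auto simp: g_def R_def)
  have Deq: "desc k B = g ` Sigma {..<k} (\<lambda>\<rho>. desc 1 (R \<rho>))"
  proof
    show "desc k B \<subseteq> g ` Sigma {..<k} (\<lambda>\<rho>. desc 1 (R \<rho>))"
    proof
      fix x assume x: "x \<in> desc k B"
      have xe: "x = x mod k + x div k * k" by simp
      have "k \<le> x" using x by (simp add: desc_def)
      then have q1: "x div k \<ge> 1" using k div_le_mono[of k x k] by simp
      have m1: "(x div k - 1) * k = x div k * k - k" by (simp add: diff_mult_distrib)
      have m2: "x div k * k \<ge> k" using q1 by simp
      have "x - k = x mod k + (x div k - 1) * k"
        using xe m1 m2 by linarith
      then have "(x mod k, x div k) \<in> Sigma {..<k} (\<lambda>\<rho>. desc 1 (R \<rho>))"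
        using x k q1 by (auto simp: R_def desc_def)
      moreover have "x = g (x mod k, x div k)" by (simp add: g_def)
      ultimately show "x \<in> g ` Sigma {..<k} (\<lambda>\<rho>. desc 1 (R \<rho>))" by blast
    qed
  next
    show "g ` Sigma {..<k} (\<lambda>\<rho>. desc 1 (R \<rho>)) \<subseteq> desc k B"
    proof
      fix x assume "x \<in> g ` Sigma {..<k} (\<lambda>\<rho>. desc 1 (R \<rho>))"
      then obtain \<rho> q where r: "\<rho> < k" and q: "q \<in> desc 1 (R \<rho>)" and xd: "x = \<rho> + q * k"
        by (auto simp: g_def)
      have q1: "q \<ge> 1" using q by (simp add: desc_def)
      have m1: "(q - 1) * k = q * k - k" by (simp add: diff_mult_distrib)
      have m2: "q * k \<ge> k" using q1 by simp
      have "x - k = \<rho> + (q - 1) * k"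
        using xd m1 m2 by linarith
      then show "x \<in> desc k B" using q q1 xd k by (auto simp: desc_def R_def intro: le_trans[OF _ le_add2])
    qed
  qed
  define n where "n = (\<lambda>\<rho>. card (R \<rho>))"
  define e where "e = (\<lambda>\<rho>. card (desc 1 (R \<rho>)))"
  have finD: "finite (desc j (R \<rho>))" for j \<rho> using finR by (simp add: desc_def)
  have cardB: "card B = (\<Sum>\<rho><k. n \<rho>)"
    unfolding Beq n_def by (simp add: card_image[OF inj] card_SigmaI finR)
  have cardD: "card (desc k B) = (\<Sum>\<rho><k. e \<rho>)"
    unfolding Deq e_def by (simp add: card_image[OF inj] card_SigmaI finD)
  have sumB: "\<Sum>B = (\<Sum>\<rho><k. \<rho> * n \<rho> + k * \<Sum>(R \<rho>))"
  proof -
    have "\<Sum>B = sum g (Sigma {..<k} R)" unfolding Beq by (simp add: sum.reindex[OF inj])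
    also have "\<dots> = (\<Sum>\<rho><k. \<Sum>q\<in>R \<rho>. \<rho> + q * k)"
      unfolding g_def by (subst sum.Sigma) (auto simp: finR)
    also have "\<dots> = (\<Sum>\<rho><k. \<rho> * n \<rho> + k * \<Sum>(R \<rho>))"
      by (simp add: n_def sum.distrib sum_distrib_left sum_distrib_right mult.commute)
    finally show ?thesis .
  qed
  define C where "C = g ` Sigma {..<k} (\<lambda>\<rho>. {..<n \<rho>})"
  have cardC: "card C = card B"
    unfolding C_def cardB by (simp add: card_image[OF inj] card_SigmaI)
  have sumC: "\<Sum>C = (\<Sum>\<rho><k. \<rho> * n \<rho> + k * (n \<rho> choose 2))"
  proof -
    have "\<Sum>C = sum g (Sigma {..<k} (\<lambda>\<rho>. {..<n \<rho>}))" unfolding C_def by (simp add: sum.reindex[OF inj])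
    also have "\<dots> = (\<Sum>\<rho><k. \<Sum>q<n \<rho>. \<rho> + q * k)"
      unfolding g_def by (subst sum.Sigma) auto
    also have "\<dots> = (\<Sum>\<rho><k. \<rho> * n \<rho> + k * (\<Sum>q<n \<rho>. q))"
      by (simp add: sum.distrib sum_distrib_left sum_distrib_right mult.commute)
    finally show ?thesis by (simp add: sum_lessThan_choose)
  qed
  have finC: "finite C" unfolding C_def by simp
  have core: "card B choose 2 \<le> \<Sum>C" using k1[OF finC] cardC by simp
  have each: "(n \<rho> choose 2) + (e \<rho> + 1 choose 2) \<le> \<Sum>(R \<rho>)" for \<rho>
    using k1[OF finR] by (simp add: n_def e_def)
  have "(\<Sum>\<rho><k. \<rho> * n \<rho> + k * (n \<rho> choose 2)) + k * (\<Sum>\<rho><k. e \<rho> + 1 choose 2)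
        = (\<Sum>\<rho><k. \<rho> * n \<rho> + k * ((n \<rho> choose 2) + (e \<rho> + 1 choose 2)))"
    by (simp add: sum.distrib sum_distrib_left algebra_simps)
  also have "\<dots> \<le> \<Sum>B" unfolding sumB
    by (intro sum_mono add_left_mono mult_left_mono each) simp
  finally have main: "(card B choose 2) + k * (\<Sum>\<rho><k. e \<rho> + 1 choose 2) \<le> \<Sum>B"
    using core sumC by linarith
  have conv: "int (l + 1) * int (card (desc k B)) - int k * int (l + 1 choose 2)
      \<le> int (\<Sum>\<rho><k. e \<rho> + 1 choose 2)"
  proof -
    have "int (l + 1) * int (card (desc k B)) - int k * int (l + 1 choose 2)
        = (\<Sum>\<rho><k. int (l + 1) * int (e \<rho>) - int (l + 1 choose 2))"
      unfolding cardD by (simp add: sum_subtractf sum_distrib_left)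
    also have "\<dots> \<le> (\<Sum>\<rho><k. int (e \<rho> + 1 choose 2))"
      by (intro sum_mono convex_choose)
    finally show ?thesis by simp
  qed
  have "int k * (int (l + 1) * int (card (desc k B)) - int k * int (l + 1 choose 2))
      \<le> int k * int (\<Sum>\<rho><k. e \<rho> + 1 choose 2)"
    using conv by (intro mult_left_mono) auto
  also have "\<dots> \<le> int (\<Sum>B) - int (card B choose 2)"
  proof -
    have "int ((card B choose 2) + k * (\<Sum>\<rho><k. e \<rho> + 1 choose 2)) \<le> int (\<Sum>B)"
      using main by (simp only: of_nat_le_iff)
    then show ?thesis by simp
  qed
  finally show ?thesis .
qed


lemma downclosed:
  assumes "finite S" and "\<And>x y. y \<in> S \<Longrightarrow> x \<le> y \<Longrightarrow> x \<in> S"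
  shows "x \<in> S \<longleftrightarrow> x < card S"
proof
  assume "x \<in> S"
  then have "{..x} \<subseteq> S" using assms(2) by auto
  then have "card {..x} \<le> card S" using assms(1) by (rule card_mono[rotated])
  then show "x < card S" by simp
next
  assume a: "x < card S"
  show "x \<in> S"
  proof (rule ccontr)
    assume "x \<notin> S"
    then have "S \<subseteq> {..<x}" using assms(2) by (metis lessThan_iff linorder_not_le subsetI)
    then have "card S \<le> x" by (metis card_lessThan card_mono finite_lessThan)
    then show False using a by simp
  qed
qed

lemma part_mono: "is_partition la \<Longrightarrow> i \<le> i' \<Longrightarrow> i' < length la \<Longrightarrow> la ! i' \<le> la ! i"
proof (cases "i = i'")
  case False
  assume "is_partition la" "i \<le> i'" "i' < length la"
  then have "sorted_wrt (\<ge>) la" "i < i'" using False by (auto simp: is_partition_def)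
  then show ?thesis using sorted_wrt_nth_less[of "(\<ge>)" la i i'] \<open>i' < length la\<close> by simp
qed simp

definition colset :: "nat list \<Rightarrow> nat \<Rightarrow> nat set" where
  "colset la j = {i'. i' < length la \<and> j < la ! i'}"

lemma colset_iff:
  assumes "is_partition la"
  shows "i' \<in> colset la j \<longleftrightarrow> i' < card (colset la j)"
proof (rule downclosed)
  show "finite (colset la j)" unfolding colset_def by simp
  fix x y assume "y \<in> colset la j" "x \<le> y"
  then show "x \<in> colset la j" using part_mono[OF assms, of x y] by (auto simp: colset_def)
qed

lemma colset_le: "card (colset la j) \<le> length la"
proof -
  have "colset la j \<subseteq> {..<length la}" by (auto simp: colset_def)
  then show ?thesis by (metis card_lessThan card_mono finite_lessThan)
qed

lemma hook_formula:
  assumes p: "is_partition la" and c: "(i, j) \<in> cells la"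
  shows "hook_length la (i, j) = (la ! i - j) + (card (colset la j) - Suc i)"
    and "i < card (colset la j)"
proof -
  let ?p = "card (colset la j)"
  have ij: "i < length la" "j < la ! i" using c by (auto simp: cells_def)
  then show ip: "i < ?p" using colset_iff[OF p, of i j] by (simp add: colset_def)
  have mem: "(i', j) \<in> cells la \<longleftrightarrow> i' < ?p" for i'
    using colset_iff[OF p, of i' j] by (simp add: colset_def cells_def)
  have H: "{v \<in> cells la. v = (i, j) \<or> (fst v = fst (i, j) \<and> snd v > snd (i, j)) \<or> (snd v = snd (i, j) \<and> fst v > fst (i, j))}
      = (\<lambda>j'. (i, j')) ` {j..<la ! i} \<union> (\<lambda>i'. (i', j)) ` {Suc i..<?p}"
  proof (rule set_eqI)
    fix v :: "nat \<times> nat"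
    obtain a b where v: "v = (a, b)" by force
    show "v \<in> {v \<in> cells la. v = (i, j) \<or> (fst v = fst (i, j) \<and> snd v > snd (i, j)) \<or> (snd v = snd (i, j) \<and> fst v > fst (i, j))}
      \<longleftrightarrow> v \<in> (\<lambda>j'. (i, j')) ` {j..<la ! i} \<union> (\<lambda>i'. (i', j)) ` {Suc i..<?p}"
      unfolding v using ij mem[of a] by (auto simp: cells_def)
  qed
  have "card ((\<lambda>j'. (i, j')) ` {j..<la ! i} \<union> (\<lambda>i'. (i', j)) ` {Suc i..<?p})
      = card ((\<lambda>j'. (i, j')) ` {j..<la ! i}) + card ((\<lambda>i'. (i', j)) ` {Suc i..<?p})"
    by (rule card_Un_disjoint) auto
  also have "\<dots> = (la ! i - j) + (?p - Suc i)"
    by (simp add: card_image inj_on_def)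
  finally show "hook_length la (i, j) = (la ! i - j) + (?p - Suc i)"
    unfolding hook_length_def H .
qed


lemma sum_rev_choose: "(\<Sum>i<n. n - Suc i) = n choose 2"
proof (induction n)
  case (Suc n)
  have "(\<Sum>i<Suc n. Suc n - Suc i) = (\<Sum>i<Suc n. n - i)" by simp
  also have "\<dots> = n + (\<Sum>i<n. n - Suc i)"
    by (simp add: lessThan_Suc_eq_insert_0 sum.reindex)
  also have "\<dots> = Suc n choose 2"
    using Suc binomial_Suc_Suc[of n 1] by (simp add: numeral_2_eq_2)
  finally show ?case .
qed simp

lemma sum_list_concat': "sum_list (concat xss) = sum_list (map sum_list (xss :: nat list list))"
  by (induction xss) auto

lemma sum_list_rep: "sum_list (replicate n (c::nat)) = n * c"
  by (induction n) auto

lemma sum_list_rev_map: "sum_list (map (\<lambda>j. sum_list (replicate k (j * k))) (rev xs)) = (\<Sum>j\<leftarrow>xs. k * (j * k))"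
  by (induction xs) (auto simp: sum_list_rep)

lemma sum_list_map_rev: "(\<Sum>x\<leftarrow>rev xs. f x) = (\<Sum>x\<leftarrow>xs. (f x :: nat))"
  by (induction xs) auto

lemma t_eq: "t m k = (m mod k) * ((m div k + 1) * k) + k * k * (m div k + 1 choose 2)"
proof -
  have "sum_list (map (\<lambda>j. sum_list (replicate k (j * k))) (rev [1..<m div k + 1]))
      = (\<Sum>j\<in>{1..<m div k + 1}. k * (j * k))"
    unfolding sum_list_rev_map sum_set_upt_conv_sum_list_nat[symmetric] set_upt ..
  also have "\<dots> = k * k * (\<Sum>j\<in>{1..<m div k + 1}. j)"
    by (simp add: sum_distrib_left algebra_simps)
  also have "(\<Sum>j\<in>{1..<m div k + 1}. j) = (\<Sum>j<m div k + 1. j)"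
    by (simp add: atLeast0LessThan[symmetric] sum.atLeast_Suc_lessThan)
  finally have X: "sum_list (map (\<lambda>j. sum_list (replicate k (j * k))) (rev [1..<m div k + 1]))
     = k * k * (m div k + 1 choose 2)" by (simp add: sum_lessThan_choose)
  show ?thesis
    unfolding t_def weight_def t_partition_def Let_def sum_list_append sum_list_concat' map_map o_def
    unfolding sum_list_rep sum_list_map_rev using X unfolding sum_list_rev_map by (simp only:)
qed

lemma weight_beta:
  assumes p: "is_partition la"
  defines "b \<equiv> \<lambda>i. la ! i + (length la - Suc i)"
  shows "inj_on b {..<length la}" and "\<Sum>(b ` {..<length la}) = weight la + (length la choose 2)"
proof -
  have lt: "b i' < b i" if "i < i'" "i' < length la" for i i'
    using part_mono[OF p, of i i'] that unfolding b_def by simp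
  show inj: "inj_on b {..<length la}"
  proof (rule inj_onI)
    fix x y assume "x \<in> {..<length la}" "y \<in> {..<length la}" "b x = b y"
    then show "x = y" using lt[of x y] lt[of y x] by (cases x y rule: linorder_cases) auto
  qed
  have "\<Sum>(b ` {..<length la}) = (\<Sum>i<length la. b i)" by (simp add: sum.reindex[OF inj])
  also have "\<dots> = (\<Sum>i<length la. la ! i) + (\<Sum>i<length la. length la - Suc i)"
    unfolding b_def by (rule sum.distrib)
  also have "\<dots> = weight la + (length la choose 2)"
    by (simp add: weight_def sum_list_sum_nth atLeast0LessThan sum_rev_choose)
  finally show "\<Sum>(b ` {..<length la}) = weight la + (length la choose 2)" .
qed


lemma hooks_le:
  assumes p: "is_partition la"
  defines "b \<equiv> \<lambda>i. la ! i + (length la - Suc i)"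
  shows "num_hooks k la \<le> card (desc k (b ` {..<length la}))"
proof -
  let ?r = "length la"
  let ?B = "b ` {..<?r}"
  let ?K = "{u \<in> cells la. hook_length la u = k}"
  have binj: "inj_on b {..<?r}" using weight_beta(1)[OF p] unfolding b_def .
  have rowinj: False if "(i, j) \<in> ?K" "(i, j') \<in> ?K" "j < j'" for i j j'
  proof -
    have c1: "(i, j) \<in> cells la" and c2: "(i, j') \<in> cells la" using that by auto
    have jl: "j' < la ! i" using c2 by (simp add: cells_def)
    have "colset la j' \<subseteq> colset la j" using \<open>j < j'\<close> by (auto simp: colset_def)
    then have "card (colset la j') \<le> card (colset la j)"
      by (rule card_mono[rotated]) (simp add: colset_def)
    moreover have "hook_length la (i, j) = hook_length la (i, j')" using that by simp
    ultimately show False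
      using hook_formula[OF p c1] hook_formula[OF p c2] jl \<open>j < j'\<close> by linarith
  qed
  have inj: "inj_on (\<lambda>u. b (fst u)) ?K"
  proof (rule inj_onI)
    fix u v assume u: "u \<in> ?K" and v: "v \<in> ?K" and e: "b (fst u) = b (fst v)"
    obtain i j where ui: "u = (i, j)" by force
    obtain i' j' where vi: "v = (i', j')" by force
    have "i < ?r" "i' < ?r" using u v ui vi by (auto simp: cells_def)
    then have "i = i'" using binj e ui vi by (auto dest: inj_onD)
    then show "u = v" using rowinj[of i j j'] rowinj[of i j' j] u v ui vi
      by (cases j j' rule: linorder_cases) auto
  qed
  have sub: "(\<lambda>u. b (fst u)) ` ?K \<subseteq> desc k ?B"
  proof
    fix x assume "x \<in> (\<lambda>u. b (fst u)) ` ?K"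
    then obtain i j where c: "(i, j) \<in> cells la" and h: "hook_length la (i, j) = k" and x: "x = b i"
      by force
    let ?p = "card (colset la j)"
    have ij: "i < ?r" "j < la ! i" using c by (auto simp: cells_def)
    have hk: "k = (la ! i - j) + (?p - Suc i)" using hook_formula(1)[OF p c] h by simp
    have ip: "i < ?p" using hook_formula(2)[OF p c] .
    have pr: "?p \<le> ?r" by (rule colset_le)
    have xB: "x \<in> ?B" using x ij by simp
    have kx: "k \<le> x" using hk x ip pr ij unfolding b_def by simp
    have xk: "x - k = j + (?r - ?p)" using hk x ip pr ij unfolding b_def by simp
    have nB: "x - k \<notin> ?B"
    proof
      assume "x - k \<in> ?B"
      then obtain i'' where i'': "i'' < ?r" "b i'' = j + (?r - ?p)" using xk by auto
      show False
      proof (cases "i'' < ?p")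
        case True
        then have "j < la ! i''" using colset_iff[OF p, of i'' j] by (simp add: colset_def)
        then show False using i'' True unfolding b_def by simp
      next
        case False
        then have "\<not> j < la ! i''" using colset_iff[OF p, of i'' j] i'' by (simp add: colset_def)
        then show False using i'' False unfolding b_def by simp
      qed
    qed
    show "x \<in> desc k ?B" using xB kx nB by (simp add: desc_def)
  qed
  have fin: "finite (desc k ?B)" by (simp add: desc_def)
  show ?thesis unfolding num_hooks_def using card_inj_on_le[OF inj sub fin] .
qed

theorem theorem3p1:
  fixes m k :: nat and la :: "nat list"
  assumes "k \<ge> 1"
    and "is_partition la"
    and "num_hooks k la = m"
  shows "weight la \<ge> t m k \<and>
         int (t m k) = int m * (int (m div k) + 1) * int k
                       - int ((m div k + 1) choose 2) * int k ^ 2"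
proof -
  define b where "b = (\<lambda>i. la ! i + (length la - Suc i))"
  define B where "B = b ` {..<length la}"
  define l where "l = m div k"
  have cardB: "card B = length la"
  proof -
    have binj: "inj_on b {..<length la}" using weight_beta(1)[OF assms(2)] unfolding b_def .
    show ?thesis unfolding B_def using card_image[OF binj] by simp
  qed
  have sumB: "\<Sum>B = weight la + (length la choose 2)"
    unfolding B_def b_def using weight_beta(2)[OF assms(2)] by simp
  have mle: "m \<le> card (desc k B)" using hooks_le[OF assms(2), of k] assms(3) unfolding B_def b_def by simp
  have ab: "int k * (int (l + 1) * int (card (desc k B)) - int k * int (l + 1 choose 2))
         \<le> int (\<Sum>B) - int (card B choose 2)"
    by (rule abacus[OF assms(1)]) (simp add: B_def)
  have tform: "int (t m k) = int m * (int l + 1) * int k - int (l + 1 choose 2) * int k ^ 2"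
  proof -
    have m: "m = l * k + m mod k" unfolding l_def by simp
    have two: "2 * int (l + 1 choose 2) = int (l + 1) * int l"
      using two_choose2[of "l+1"] by (metis diff_add_inverse2 of_nat_mult of_nat_numeral)
    have "2 * int (t m k) = 2 * (int (m mod k) * ((int l + 1) * int k) + int k * int k * int (l + 1 choose 2))"
      unfolding t_eq l_def by (simp add: algebra_simps)
    also have "\<dots> = 2 * (int m * (int l + 1) * int k - int (l + 1 choose 2) * int k ^ 2)"
    proof -
      have mi: "int m = int l * int k + int (m mod k)" using m by (metis of_nat_add of_nat_mult)
      show ?thesis unfolding mi using two by (simp add: algebra_simps power2_eq_square)
    qed
    finally show ?thesis by simp
  qed
  have "int (t m k) \<le> int k * (int (l + 1) * int (card (desc k B)) - int k * int (l + 1 choose 2))"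
  proof -
    have "int (l + 1) * int m \<le> int (l + 1) * int (card (desc k B))"
      using mle by (intro mult_left_mono) auto
    then have "int k * (int (l + 1) * int m) \<le> int k * (int (l + 1) * int (card (desc k B)))"
      by (intro mult_left_mono) auto
    then show ?thesis unfolding tform by (simp add: algebra_simps power2_eq_square)
  qed
  also have "\<dots> \<le> int (weight la)" using ab sumB cardB by simp
  finally have "t m k \<le> weight la" by simp
  then show ?thesis using tform unfolding l_def by simp
qed

end
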